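(* Let $\gamma>0$ and let $(x_1,x_2,x_3)$ be distributed according to $\nu=\nu^\gamma_{1/3,3}$. For each $n\in\mathbb{N}$ let $$J_n(u)=\frac{\Gamma(n+\gamma)}{n!\,\Gamma(n+3\gamma-1)}\sum_{k=0}^n(-1)^k\binom nk\frac{\Gamma(n+k+3\gamma-1)}{\Gamma(k+\gamma)}u^k .$$ Then for all $i\ne j$ in $\{1,2,3\}$ and all $n\in\mathbb{N}$, $$E_\nu[J_n(x_i)\mid x_j]=\nu_n\,J_n(x_j),\qquad \nu_n=(-1)^n\frac{\Gamma(2\gamma)\Gamma(n+\gamma)}{\Gamma(\gamma)\Gamma(n+2\gamma)} .$$
   Context: $\nu^{\gamma}(dx)=x^{\gamma-1}e^{-x}\Gamma(\gamma)^{-1}dx$ on $(0,\infty)$ and $\nu^\gamma_{1/3,3}$ is the conditional law of $(\nu^\gamma)^{\otimes3}$ on $\{x\in(0,\infty)^3: x_1+x_2+x_3=1\}$ (a Dirichlet$(\gamma,\gamma,\gamma)$ distribution). The $J_n$ are the Jacobi polynomials orthogonal for the Beta$(\gamma,2\gamma)$ distribution, which is the marginal law of each $x_i$. $E_\nu[\cdot\mid x_j]$ denotes conditional expectation given the $\sigma$-algebra generated by $x_j$. *)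

theory Defs
  imports "HOL-Probability.Probability"
begin

text \<open>Dirichlet(gamma,gamma,gamma) law on the 2-simplex {x1+x2+x3=1, xi>0}, realised
  as a measure on the pair (x1,x2); the third coordinate is x3 = 1 - x1 - x2.\<close>

definition dirichlet_density :: "real \<Rightarrow> real \<times> real \<Rightarrow> real" where
  "dirichlet_density g p =
     (if 0 < fst p \<and> 0 < snd p \<and> fst p + snd p < 1 then
        Gamma (3 * g) / (Gamma g) ^ 3 *
        (fst p powr (g - 1)) * (snd p powr (g - 1)) * ((1 - fst p - snd p) powr (g - 1))
      else 0)"

definition dirichlet3 :: "real \<Rightarrow> (real \<times> real) measure" where
  "dirichlet3 g = density lborel (\<lambda>p. ennreal (dirichlet_density g p))"

definition coord :: "nat \<Rightarrow> real \<times> real \<Rightarrow> real" where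
  "coord i p = (if i = 1 then fst p else if i = 2 then snd p else 1 - fst p - snd p)"

text \<open>Jacobi polynomials orthogonal for Beta(gamma, 2 gamma), as given in the paper.\<close>
definition jacobiJ :: "real \<Rightarrow> nat \<Rightarrow> real \<Rightarrow> real" where
  "jacobiJ g n u =
     Gamma (real n + g) / (fact n * Gamma (real n + 3 * g - 1)) *
     (\<Sum>k=0..n. (-1) ^ k * real (n choose k) *
        Gamma (real n + real k + 3 * g - 1) / Gamma (real k + g) * u ^ k)"

definition jacobi_eig :: "real \<Rightarrow> nat \<Rightarrow> real" where
  "jacobi_eig g n = (-1) ^ n * (Gamma (2 * g) * Gamma (real n + g)) / (Gamma g * Gamma (real n + 2 * g))"

end

theory Submission
  imports Defs "HOL-Computational_Algebra.Formal_Power_Series"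
begin


lemma sum_swap_tri:
  fixes f :: "nat \<Rightarrow> nat \<Rightarrow> 'a::comm_monoid_add"
  shows "(\<Sum>k=0..n. \<Sum>m=0..k. f k m) = (\<Sum>m=0..n. \<Sum>k=m..n. f k m)"
proof -
  have 1: "(\<Sum>m=0..k. f k m) = (\<Sum>m=0..n. if m \<le> k then f k m else 0)" if "k \<le> n" for k
  proof -
    have "(\<Sum>m=0..n. if m \<le> k then f k m else 0) = sum (f k) ({0..n} \<inter> {m. m \<le> k})"
      by (simp add: sum.inter_restrict)
    also have "{0..n} \<inter> {m. m \<le> k} = {0..k}" using that by auto
    finally show ?thesis by simp
  qed
  have 2: "(\<Sum>k=m..n. f k m) = (\<Sum>k=0..n. if m \<le> k then f k m else 0)" if "m \<le> n" for m
  proof -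
    have "(\<Sum>k=0..n. if m \<le> k then f k m else 0) = sum (\<lambda>k. f k m) ({0..n} \<inter> {k. m \<le> k})"
      by (simp add: sum.inter_restrict)
    also have "{0..n} \<inter> {k. m \<le> k} = {m..n}" by auto
    finally show ?thesis by simp
  qed
  have "(\<Sum>k=0..n. \<Sum>m=0..k. f k m) = (\<Sum>k=0..n. \<Sum>m=0..n. if m \<le> k then f k m else 0)"
    by (rule sum.cong) (auto simp: 1)
  also have "\<dots> = (\<Sum>m=0..n. \<Sum>k=0..n. if m \<le> k then f k m else 0)" by (rule sum.swap)
  also have "\<dots> = (\<Sum>m=0..n. \<Sum>k=m..n. f k m)"
    by (rule sum.cong) (auto simp: 2)
  finally show ?thesis .
qed

lemma chu_vdm:
  fixes a c :: real and N :: nat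
  assumes "c > 0"
  shows "(\<Sum>j=0..N. (-1)^j * real (N choose j) * pochhammer a j / pochhammer c j)
         = pochhammer (c - a) N / pochhammer c N"
proof -
  have cne: "\<forall>i \<in> {0..<N}. c \<noteq> - of_nat i" using assms by auto
  have key: "pochhammer (- real N) j / fact j = (-1)^j * real (N choose j)" for j
  proof -
    define s where "s = (-1::real)^j"
    define P where "P = pochhammer (- real N) j"
    define G where "G = real N gchoose j"
    have h1: "G = s * P / fact j" by (simp add: gbinomial_pochhammer s_def P_def G_def)
    have h2: "s * s = 1" by (simp add: s_def flip: power_mult_distrib)
    have h3: "real (N choose j) = G" by (simp add: binomial_gbinomial G_def)
    have "P / fact j = (s * s) * P / fact j" using h2 by simp
    also have "\<dots> = s * G" by (simp add: h1 algebra_simps)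
    finally have "P / fact j = s * G" .
    thus ?thesis using h3 by (simp add: s_def P_def)
  qed
  have "(\<Sum>j=0..N. (-1)^j * real (N choose j) * pochhammer a j / pochhammer c j)
      = (\<Sum>j=0..N. (pochhammer a j * pochhammer (- of_nat N) j) / (of_nat (fact j) * pochhammer c j))"
  proof (rule sum.cong[OF refl])
    fix j
    have "(pochhammer a j * pochhammer (- real N) j) / (of_nat (fact j) * pochhammer c j)
        = (pochhammer (- real N) j / fact j) * pochhammer a j / pochhammer c j"
      by (simp add: field_simps)
    then show "(-1)^j * real (N choose j) * pochhammer a j / pochhammer c j
        = (pochhammer a j * pochhammer (- of_nat N) j) / (of_nat (fact j) * pochhammer c j)"
      by (simp add: key)
  qed
  also have "\<dots> = pochhammer (c - a) N / pochhammer c N"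
    by (rule Vandermonde_pochhammer[OF cne])
  finally show ?thesis .
qed

lemma coeff_id:
  fixes g b :: real and n m :: nat
  assumes g: "g > 0" and b: "b = real n + 3*g - 1" and mn: "m \<le> n"
  shows "(\<Sum>k=m..n. (-1)^k * real (n choose k) * pochhammer b k / pochhammer (2*g) k * real (k choose m)) * (-1)^m
       = (-1)^n * pochhammer g n / pochhammer (2*g) n * ((-1)^m * real (n choose m) * pochhammer b m / pochhammer g m)"
proof -
  define N where "N = n - m"
  have nN: "n = N + m" using mn by (simp add: N_def)
  define P2 where "P2 = pochhammer (2*g) m"
  define Pb where "Pb = pochhammer b m"
  have P2pos: "pochhammer (2*g) k > 0" for k using g by (intro pochhammer_pos) auto
  have P2mpos: "pochhammer (2*g + real m) k > 0" for k using g by (intro pochhammer_pos) auto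
  have Pgpos: "pochhammer g k > 0" for k using g by (intro pochhammer_pos) auto
  have "(\<Sum>k=m..n. (-1)^k * real (n choose k) * pochhammer b k / pochhammer (2*g) k * real (k choose m))
      = (\<Sum>j=0..N. (-1)^(j+m) * real (n choose (j+m)) * pochhammer b (j+m) / pochhammer (2*g) (j+m) * real ((j+m) choose m))"
    using sum.shift_bounds_cl_nat_ivl[of "\<lambda>k. (-1)^k * real (n choose k) * pochhammer b k / pochhammer (2*g) k * real (k choose m)" 0 m N]
    by (simp add: nN)
  also have "\<dots> = (\<Sum>j=0..N. ((-1)^m * real (n choose m) * Pb / P2) *
        ((-1)^j * real (N choose j) * pochhammer (b + real m) j / pochhammer (2*g + real m) j))"
  proof (rule sum.cong[OF refl])
    fix j assume "j \<in> {0..N}"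
    have ch: "real (n choose (j+m)) * real ((j+m) choose m) = real (n choose m) * real (N choose j)"
    proof -
      have "(n choose (j+m)) * ((j+m) choose m) = (n choose m) * ((n - m) choose (j+m-m))"
        by (rule choose_mult) (use \<open>j \<in> {0..N}\<close> nN in auto)
      then show ?thesis by (simp add: N_def flip: of_nat_mult)
    qed
    have pb: "pochhammer b (j+m) = Pb * pochhammer (b + real m) j"
      unfolding Pb_def using pochhammer_product'[of b m j] by (simp add: add.commute)
    have p2: "pochhammer (2*g) (j+m) = P2 * pochhammer (2*g + real m) j"
      unfolding P2_def using pochhammer_product'[of "2*g" m j] by (simp add: add.commute)
    have ne1: "P2 \<noteq> 0" using P2pos[of m] by (simp add: P2_def)
    have ne2: "pochhammer (2*g + real m) j \<noteq> 0" using P2mpos[of j] by simp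
    show "(-1)^(j+m) * real (n choose (j+m)) * pochhammer b (j+m) / pochhammer (2*g) (j+m) * real ((j+m) choose m)
        = ((-1)^m * real (n choose m) * Pb / P2) *
          ((-1)^j * real (N choose j) * pochhammer (b + real m) j / pochhammer (2*g + real m) j)"
      unfolding pb p2 using ne1 ne2 ch
      by (simp add: power_add field_simps)
  qed
  also have "\<dots> = ((-1)^m * real (n choose m) * Pb / P2) *
        (\<Sum>j=0..N. (-1)^j * real (N choose j) * pochhammer (b + real m) j / pochhammer (2*g + real m) j)"
    by (simp add: sum_distrib_left)
  also have "(\<Sum>j=0..N. (-1)^j * real (N choose j) * pochhammer (b + real m) j / pochhammer (2*g + real m) j)
      = pochhammer (2*g + real m - (b + real m)) N / pochhammer (2*g + real m) N"
    by (rule chu_vdm) (use g in auto)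
  also have "2*g + real m - (b + real m) = - (real N + (g + real m) - 1)"
    using b nN by simp
  also have "pochhammer (- (real N + (g + real m) - 1)) N = (-1)^N * pochhammer (g + real m) N"
    by (subst pochhammer_minus) simp
  finally have L: "(\<Sum>k=m..n. (-1)^k * real (n choose k) * pochhammer b k / pochhammer (2*g) k * real (k choose m))
     = ((-1)^m * real (n choose m) * Pb / P2) * ((-1)^N * pochhammer (g + real m) N / pochhammer (2*g + real m) N)"
    by simp
  have p2n: "pochhammer (2*g) n = P2 * pochhammer (2*g + real m) N"
    unfolding P2_def nN using pochhammer_product'[of "2*g" m N] by (simp add: add.commute)
  have pgn: "pochhammer g n = pochhammer g m * pochhammer (g + real m) N"
    unfolding nN using pochhammer_product'[of g m N] by (simp add: add.commute)
  have sgn: "(-1::real)^n * (-1)^m = (-1)^N"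
  proof -
    have "(-1::real)^n * (-1)^m = (-1)^N * ((-1)^m * (-1)^m)" by (simp add: nN power_add)
    also have "(-1::real)^m * (-1)^m = 1" by (simp flip: power_mult_distrib)
    finally show ?thesis by simp
  qed
  have ne1: "P2 \<noteq> 0" using P2pos[of m] by (simp add: P2_def)
  have ne2: "pochhammer (2*g + real m) N \<noteq> 0" using P2mpos[of N] by simp
  have ne3: "pochhammer g m \<noteq> 0" using Pgpos[of m] by simp
  have sm: "(-1::real)^m * (-1)^m = 1" by (simp flip: power_mult_distrib)
  show ?thesis
    unfolding L p2n pgn Pb_def[symmetric] using ne1 ne2 ne3 sgn sm
    by (simp add: field_simps)
qed

lemma hyp_id:
  fixes g b t :: real and n :: nat
  assumes g: "g > 0" and b: "b = real n + 3*g - 1"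
  shows "(\<Sum>k=0..n. (-1)^k * real (n choose k) * pochhammer b k / pochhammer (2*g) k * (1-t)^k)
       = (-1)^n * pochhammer g n / pochhammer (2*g) n *
         (\<Sum>k=0..n. (-1)^k * real (n choose k) * pochhammer b k / pochhammer g k * t^k)"
proof -
  define \<alpha> where "\<alpha> k = (-1)^k * real (n choose k) * pochhammer b k / pochhammer (2*g) k" for k
  define R where "R = (-1)^n * pochhammer g n / pochhammer (2*g) n"
  have "(\<Sum>k=0..n. \<alpha> k * (1-t)^k) = (\<Sum>k=0..n. \<Sum>m=0..k. \<alpha> k * (real (k choose m) * (-1)^m * t^m))"
  proof (rule sum.cong[OF refl])
    fix k
    have "(1-t)^k = ((-t) + 1)^k" by simp
    also have "\<dots> = (\<Sum>m\<le>k. real (k choose m) * (-t)^m * 1^(k-m))" by (rule binomial_ring)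
    also have "\<dots> = (\<Sum>m=0..k. real (k choose m) * (-1)^m * t^m)"
      by (simp add: atMost_atLeast0 mult.assoc flip: power_mult_distrib)
    finally show "\<alpha> k * (1-t)^k = (\<Sum>m=0..k. \<alpha> k * (real (k choose m) * (-1)^m * t^m))"
      by (simp add: sum_distrib_left)
  qed
  also have "\<dots> = (\<Sum>m=0..n. \<Sum>k=m..n. \<alpha> k * (real (k choose m) * (-1)^m * t^m))"
    by (rule sum_swap_tri)
  also have "\<dots> = (\<Sum>m=0..n. ((\<Sum>k=m..n. \<alpha> k * real (k choose m)) * (-1)^m) * t^m)"
    by (rule sum.cong[OF refl]) (simp add: sum_distrib_right mult.assoc)
  also have "\<dots> = (\<Sum>m=0..n. R * ((-1)^m * real (n choose m) * pochhammer b m / pochhammer g m) * t^m)"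
    by (rule sum.cong[OF refl]) (use coeff_id[OF g b] in \<open>simp add: \<alpha>_def R_def\<close>)
  also have "\<dots> = R * (\<Sum>m=0..n. (-1)^m * real (n choose m) * pochhammer b m / pochhammer g m * t^m)"
    by (simp add: sum_distrib_left mult.assoc)
  finally show ?thesis by (simp only: \<alpha>_def R_def)
qed



lemma Gamma_shift: "x > 0 \<Longrightarrow> Gamma (x + real k) = pochhammer x k * Gamma (x::real)"
proof -
  assume x: "x > 0"
  have "x \<notin> \<int>\<^sub>\<le>\<^sub>0" using x nonpos_Ints_nonpos by force
  from pochhammer_Gamma[OF this, of k] Gamma_real_pos[OF x] show ?thesis by simp
qed

lemma gamma_id:
  fixes g t :: real and n :: nat
  assumes g: "g > 0"
  shows "(\<Sum>k=0..n. (-1)^k * real (n choose k) * Gamma (real n + real k + 3*g - 1) / Gamma (real k + g)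
            * (1-t)^k * Beta (real k + g) g)
       = jacobi_eig g n * Beta g g *
         (\<Sum>k=0..n. (-1)^k * real (n choose k) * Gamma (real n + real k + 3*g - 1) / Gamma (real k + g) * t^k)"
proof (cases "n = 0")
  case True
  have "Gamma g > 0" "Gamma (2*g) > 0" using g by (auto intro: Gamma_real_pos)
  then show ?thesis using True by (simp add: jacobi_eig_def)
next
  case False
  define b where "b = real n + 3*g - 1"
  have bpos: "b > 0" using False g by (simp add: b_def)
  have Gg: "Gamma g > 0" and G2g: "Gamma (2*g) > 0" and Gb: "Gamma b > 0"
    using g bpos by (auto intro: Gamma_real_pos)
  have Pg: "pochhammer g k > 0" and P2g: "pochhammer (2*g) k > 0" for k
    using g by (auto intro: pochhammer_pos)
  have G1: "Gamma (real n + real k + 3*g - 1) = pochhammer b k * Gamma b" for k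
    using Gamma_shift[OF bpos, of k] by (simp add: b_def algebra_simps)
  have G2: "Gamma (real k + g) = pochhammer g k * Gamma g" for k
    using Gamma_shift[OF g, of k] by (simp add: algebra_simps)
  have G3: "Gamma (real k + g + g) = pochhammer (2*g) k * Gamma (2*g)" for k
    using Gamma_shift[of "2*g" k] g by (simp add: algebra_simps)
  have G3': "Gamma (g + g) = Gamma (2*g)" by (simp only: mult_2)
  define c1 where "c1 = Gamma b * Gamma g / Gamma (2*g)"
  have "(\<Sum>k=0..n. (-1)^k * real (n choose k) * Gamma (real n + real k + 3*g - 1) / Gamma (real k + g)
            * (1-t)^k * Beta (real k + g) g)
      = (\<Sum>k=0..n. c1 * ((-1)^k * real (n choose k) * pochhammer b k / pochhammer (2*g) k * (1-t)^k))"
  proof (rule sum.cong[OF refl])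
    fix k
    have "pochhammer g k \<noteq> 0" "pochhammer (2*g) k \<noteq> 0" using Pg[of k] P2g[of k] by auto
    then show "(-1)^k * real (n choose k) * Gamma (real n + real k + 3*g - 1) / Gamma (real k + g)
            * (1-t)^k * Beta (real k + g) g
        = c1 * ((-1)^k * real (n choose k) * pochhammer b k / pochhammer (2*g) k * (1-t)^k)"
      unfolding Beta_def G1 G2 G3 c1_def using Gg G2g by (simp add: field_simps)
  qed
  also have "\<dots> = c1 * (\<Sum>k=0..n. (-1)^k * real (n choose k) * pochhammer b k / pochhammer (2*g) k * (1-t)^k)"
    by (simp add: sum_distrib_left)
  also have "\<dots> = c1 * ((-1)^n * pochhammer g n / pochhammer (2*g) n *
         (\<Sum>k=0..n. (-1)^k * real (n choose k) * pochhammer b k / pochhammer g k * t^k))"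
    by (simp only: hyp_id[OF g b_def])
  also have "\<dots> = jacobi_eig g n * Beta g g *
         (\<Sum>k=0..n. (-1)^k * real (n choose k) * Gamma (real n + real k + 3*g - 1) / Gamma (real k + g) * t^k)"
  proof -
    have e: "jacobi_eig g n * Beta g g = (-1)^n * pochhammer g n / pochhammer (2*g) n * Gamma g * Gamma g / Gamma (2*g)"
      unfolding jacobi_eig_def Beta_def G3'
      using G2[of n] G3[of n] Gg G2g Pg[of n] P2g[of n] by (simp add: field_simps)
    have s: "(\<Sum>k=0..n. (-1)^k * real (n choose k) * Gamma (real n + real k + 3*g - 1) / Gamma (real k + g) * t^k)
        = Gamma b / Gamma g * (\<Sum>k=0..n. (-1)^k * real (n choose k) * pochhammer b k / pochhammer g k * t^k)"
      unfolding sum_distrib_left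
    proof (rule sum.cong[OF refl])
      fix k
      have "pochhammer g k \<noteq> 0" using Pg[of k] by auto
      then show "(-1)^k * real (n choose k) * Gamma (real n + real k + 3*g - 1) / Gamma (real k + g) * t^k
          = Gamma b / Gamma g * ((-1)^k * real (n choose k) * pochhammer b k / pochhammer g k * t^k)"
        unfolding G1 G2 using Gg by (simp add: field_simps)
    qed
    show ?thesis unfolding e s c1_def using Gg G2g by (simp add: field_simps)
  qed
  finally show ?thesis .
qed



definition dcon :: "real \<Rightarrow> real" where "dcon g = Gamma (3 * g) / (Gamma g) ^ 3"

definition insimp :: "real \<times> real \<Rightarrow> bool" where
  "insimp p \<longleftrightarrow> 0 < fst p \<and> 0 < snd p \<and> fst p + snd p < 1"

lemma dd_eq: "dirichlet_density g (a, b) =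
   (if 0 < a \<and> 0 < b \<and> a + b < 1 then dcon g * (a powr (g-1)) * (b powr (g-1)) * ((1-a-b) powr (g-1)) else 0)"
  by (simp add: dirichlet_density_def dcon_def)

lemma dd_sym: "dirichlet_density g (a, b) = dirichlet_density g (b, a)"
  unfolding dd_eq by (auto simp: algebra_simps)

lemma dd_refl: "dirichlet_density g (a, 1 - a - b) = dirichlet_density g (a, b)"
  unfolding dd_eq by (auto simp: algebra_simps)

lemma dd_zero: "\<not> insimp p \<Longrightarrow> dirichlet_density g p = 0"
  unfolding dirichlet_density_def insimp_def by auto

lemma dcon_pos: "g > 0 \<Longrightarrow> dcon g > 0"
  by (simp add: dcon_def Gamma_real_pos)

lemma dd_nonneg: "g > 0 \<Longrightarrow> 0 \<le> dirichlet_density g p"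
  using dcon_pos[of g] by (cases p) (auto simp: dd_eq)

lemma dd_meas [measurable]: "dirichlet_density g \<in> borel_measurable borel"
  unfolding dirichlet_density_def borel_prod[symmetric] by measurable

lemma coord_meas [measurable]: "coord j \<in> borel_measurable borel"
  unfolding coord_def borel_prod[symmetric] by measurable

lemma inner_mom:
  fixes g t :: real and m :: nat
  assumes g: "g > 0" and t: "0 < t" "t < 1"
  shows "integrable lborel (\<lambda>s. s ^ m * dirichlet_density g (t, s))"
    and "(LBINT s. s ^ m * dirichlet_density g (t, s)) =
          dcon g * t powr (g - 1) * (1 - t) powr (real m + 2 * g - 1) * Beta (real m + g) g"
proof -
  define c where "c = 1 - t"
  have c: "c > 0" using t by (simp add: c_def)
  define f where "f s = s ^ m * dirichlet_density g (t, s)" for s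
  define K where "K = dcon g * t powr (g - 1) * c powr (real m + 2 * g - 2)"
  define h where "h u = indicator {0..1} u * (u powr (real m + g - 1) * (1 - u) powr (g - 1))" for u :: real
  have fe: "f (0 + c * u) = K * h u" for u
  proof (cases "0 < u \<and> u < 1")
    case True
    have cu: "0 < c * u" "t + c * u < 1"
      using True c t mult_pos_pos[of "1-t" "1-u"] by (auto simp: c_def algebra_simps)
    have e1: "1 - t - c * u = c * (1 - u)" by (simp add: c_def algebra_simps)
    have e2: "(c * u) ^ m * ((c * u) powr (g - 1) * (c * (1 - u)) powr (g - 1))
        = c powr (real m + 2 * g - 2) * (u powr (real m + g - 1) * (1 - u) powr (g - 1))"
    proof -
      have "(c * u) ^ m = c powr real m * u powr real m"
        using c True by (simp add: powr_realpow power_mult_distrib)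
      moreover have "(c * u) powr (g - 1) = c powr (g - 1) * u powr (g - 1)"
        using c True by (simp add: powr_mult)
      moreover have "(c * (1 - u)) powr (g - 1) = c powr (g - 1) * (1 - u) powr (g - 1)"
        using c True by (simp add: powr_mult)
      moreover have "c powr (real m + 2 * g - 2) = c powr real m * c powr (g - 1) * c powr (g - 1)"
        by (simp add: powr_add[symmetric]) (simp add: algebra_simps)
      moreover have "u powr (real m + g - 1) = u powr real m * u powr (g - 1)"
        by (simp add: powr_add[symmetric]) (simp add: algebra_simps)
      ultimately show ?thesis by (simp add: algebra_simps)
    qed
    have dd: "dirichlet_density g (t, c*u) = dcon g * t powr (g-1) * (c*u) powr (g-1) * (1 - t - c*u) powr (g-1)"
      by (rule trans[OF dd_eq if_P]) (use t cu in auto)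
    have "f (0 + c * u) = dcon g * t powr (g - 1) * ((c * u) ^ m * ((c * u) powr (g - 1) * (c * (1 - u)) powr (g - 1)))"
      unfolding f_def add.left_neutral dd e1 by (simp only: mult_ac)
    also have "\<dots> = K * h u" unfolding e2 using True by (simp add: K_def h_def indicator_def)
    finally show ?thesis .
  next
    case False
    have "\<not> (0 < c * u \<and> t + c * u < 1)"
    proof
      assume a: "0 < c * u \<and> t + c * u < 1"
      have u0: "u > 0" using a c by (simp add: zero_less_mult_iff)
      have "c * u < c * 1" using a c_def by linarith
      then have u1: "u < 1" using c by simp
      show False using False u0 u1 by simp
    qed
    moreover have "h u = 0" using False by (auto simp: h_def indicator_def)
    ultimately show ?thesis by (auto simp: f_def dd_eq)
  qed
  have hint: "integrable lborel h"
    using integrable_Beta[of "real m + g" g] g unfolding set_integrable_def h_def by simp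
  have hval: "(LBINT u. h u) = Beta (real m + g) g"
  proof -
    have si: "set_integrable lborel {0..1} (\<lambda>u. u powr (real m + g - 1) * (1 - u) powr (g - 1))"
      using integrable_Beta[of "real m + g" g] g by simp
    have "(LBINT u. h u) = set_lebesgue_integral lborel {0..1} (\<lambda>u. u powr (real m + g - 1) * (1 - u) powr (g - 1))"
      by (simp add: set_lebesgue_integral_def h_def)
    also have "\<dots> = integral {0..1} (\<lambda>u. u powr (real m + g - 1) * (1 - u) powr (g - 1))"
      by (rule set_borel_integral_eq_integral(2)[OF si])
    also have "\<dots> = Beta (real m + g) g"
      using has_integral_Beta_real[of "real m + g" g] g by (simp add: integral_unique)
    finally show ?thesis .
  qed
  have fint: "integrable lborel (\<lambda>u. f (0 + c * u))"
    unfolding fe using hint by simp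
  show "integrable lborel (\<lambda>s. s ^ m * dirichlet_density g (t, s))"
  proof -
    have "integrable lborel f" using fint lborel_integrable_real_affine_iff[of c f 0] c by simp
    then show ?thesis by (simp add: f_def[abs_def])
  qed
  have "(LBINT s. f s) = \<bar>c\<bar> *\<^sub>R (LBINT u. f (0 + c * u))"
    by (rule lborel_integral_real_affine) (use c in simp)
  also have "\<dots> = c * (K * Beta (real m + g) g)"
    unfolding fe using c hval by simp
  also have "\<dots> = dcon g * t powr (g - 1) * (1 - t) powr (real m + 2 * g - 1) * Beta (real m + g) g"
  proof -
    have "c * c powr (real m + 2 * g - 2) = c powr (real m + 2 * g - 1)"
      using c by (simp add: powr_add[symmetric] powr_mult_base algebra_simps)
    moreover have "c * (K * Beta (real m + g) g) = dcon g * t powr (g - 1) * (c * c powr (real m + 2 * g - 2)) * Beta (real m + g) g"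
      by (simp add: K_def mult_ac)
    ultimately show ?thesis by (simp add: c_def)
  qed
  finally show "(LBINT s. s ^ m * dirichlet_density g (t, s)) =
          dcon g * t powr (g - 1) * (1 - t) powr (real m + 2 * g - 1) * Beta (real m + g) g"
    by (simp add: f_def)
qed



lemma dd_zero_t: "\<not> (0 < t \<and> t < 1) \<Longrightarrow> dirichlet_density g (t, s) = 0"
  by (rule dd_zero) (auto simp: insimp_def)

lemma key1d:
  fixes g t :: real and n :: nat
  assumes g: "g > 0"
  shows "(LBINT s. dirichlet_density g (t, s) * jacobiJ g n s)
       = jacobi_eig g n * jacobiJ g n t * (LBINT s. dirichlet_density g (t, s))"
proof (cases "0 < t \<and> t < 1")
  case False
  then show ?thesis by (simp add: dd_zero_t)
next
  case True
  then have t: "0 < t" "t < 1" by auto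
  define a where "a k = (-1) ^ k * real (n choose k) * Gamma (real n + real k + 3 * g - 1) / Gamma (real k + g)" for k
  define Kc where "Kc = Gamma (real n + g) / (fact n * Gamma (real n + 3 * g - 1))"
  define D where "D = dcon g * t powr (g - 1) * (1 - t) powr (2 * g - 1)"
  have J: "jacobiJ g n u = Kc * (\<Sum>k=0..n. a k * u ^ k)" for u
    by (simp add: jacobiJ_def a_def Kc_def)
  have "(LBINT s. dirichlet_density g (t, s) * jacobiJ g n s)
      = (LBINT s. (\<Sum>k=0..n. (Kc * a k) * (s ^ k * dirichlet_density g (t, s))))"
    by (simp add: J sum_distrib_left sum_distrib_right mult_ac)
  also have "\<dots> = (\<Sum>k=0..n. LBINT s. (Kc * a k) * (s ^ k * dirichlet_density g (t, s)))"
    by (rule Bochner_Integration.integral_sum[where f="\<lambda>k s. (Kc * a k) * (s ^ k * dirichlet_density g (t, s))"])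
       (use inner_mom(1)[OF g t] in auto)
  also have "\<dots> = (\<Sum>k=0..n. (Kc * a k) * (dcon g * t powr (g - 1) * (1 - t) powr (real k + 2 * g - 1) * Beta (real k + g) g))"
    by (simp add: inner_mom(2)[OF g t])
  also have "\<dots> = Kc * D * (\<Sum>k=0..n. a k * (1 - t) ^ k * Beta (real k + g) g)"
  proof -
    have p: "(1 - t) powr (real k + 2 * g - 1) = (1 - t) ^ k * (1 - t) powr (2 * g - 1)" for k
    proof -
      have "(1 - t) powr (real k + 2 * g - 1) = (1 - t) powr real k * (1 - t) powr (2 * g - 1)"
        by (simp add: powr_add[symmetric] algebra_simps)
      also have "(1 - t) powr real k = (1 - t) ^ k" using t by (simp add: powr_realpow)
      finally show ?thesis .
    qed
    show ?thesis unfolding p D_def sum_distrib_left by (rule sum.cong) (simp_all add: mult_ac)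
  qed
  also have "\<dots> = Kc * D * (jacobi_eig g n * Beta g g * (\<Sum>k=0..n. a k * t ^ k))"
    using gamma_id[OF g, of n t] by (simp add: a_def)
  also have "\<dots> = jacobi_eig g n * jacobiJ g n t * (LBINT s. dirichlet_density g (t, s))"
    using inner_mom(2)[OF g t, of 0] by (simp add: J D_def mult_ac)
  finally show ?thesis .
qed

lemma refl_int:
  fixes h :: "real \<Rightarrow> real"
  shows "(LBINT s. dirichlet_density g (t, s) * h (1 - t - s)) = (LBINT s. dirichlet_density g (t, s) * h s)"
proof -
  define f where "f s = dirichlet_density g (t, s) * h s" for s
  have "(LBINT s. f s) = \<bar>-1\<bar> *\<^sub>R (LBINT x. f ((1 - t) + (-1) * x))"
    by (rule lborel_integral_real_affine) simp
  also have "\<dots> = (LBINT x. dirichlet_density g (t, x) * h (1 - t - x))"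
  proof -
    have "f ((1 - t) + (-1) * x) = dirichlet_density g (t, x) * h (1 - t - x)" for x
      using dd_refl[of g t x] by (simp add: f_def)
    then show ?thesis by simp
  qed
  finally show ?thesis by (simp add: f_def)
qed



lemma rho_int:
  fixes g :: real
  assumes g: "g > 0"
  shows "integrable lborel (dirichlet_density g)"
proof -
  define \<phi> where "\<phi> t = indicator {0..1} t * (dcon g * Beta g g * (t powr (g - 1) * (1 - t) powr (2 * g - 1)))" for t :: real
  have phi_int: "integrable lborel \<phi>"
  proof -
    have "integrable lborel (\<lambda>t. indicator {0..1} t *\<^sub>R (t powr (g - 1) * (1 - t) powr (2 * g - 1)))"
      using integrable_Beta[of g "2 * g"] g unfolding set_integrable_def by simp
    then have "integrable lborel (\<lambda>t. (dcon g * Beta g g) * (indicator {0..1} t *\<^sub>R (t powr (g - 1) * (1 - t) powr (2 * g - 1))))"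
      by (rule integrable_mult_right)
    moreover have "\<phi> = (\<lambda>t. (dcon g * Beta g g) * (indicator {0..1} t *\<^sub>R (t powr (g - 1) * (1 - t) powr (2 * g - 1))))"
      by (auto simp: \<phi>_def fun_eq_iff)
    ultimately show ?thesis by simp
  qed
  have phi_nn: "0 \<le> \<phi> t" for t
  proof -
    have "Beta g g > 0" using g by (simp add: Beta_def Gamma_real_pos)
    then show ?thesis using dcon_pos[OF g] by (simp add: \<phi>_def indicator_def)
  qed
  have inner: "(\<integral>\<^sup>+ s. ennreal (dirichlet_density g (t, s)) \<partial>lborel) = ennreal (\<phi> t)" for t
  proof (cases "0 < t \<and> t < 1")
    case True
    then have t: "0 < t" "t < 1" by auto
    have "(\<integral>\<^sup>+ s. ennreal (dirichlet_density g (t, s)) \<partial>lborel) = ennreal (LBINT s. dirichlet_density g (t, s))"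
      by (rule nn_integral_eq_integral) (use inner_mom(1)[OF g t, of 0] dd_nonneg[OF g] in auto)
    also have "\<dots> = ennreal (\<phi> t)"
      using inner_mom(2)[OF g t, of 0] t by (simp add: \<phi>_def mult_ac)
    finally show ?thesis .
  next
    case False
    then have "\<phi> t = 0" by (auto simp: \<phi>_def indicator_def)
    then show ?thesis using False by (simp add: dd_zero_t)
  qed
  have "(\<integral>\<^sup>+ p. ennreal (dirichlet_density g p) \<partial>(lborel :: (real \<times> real) measure))
      = (\<integral>\<^sup>+ p. ennreal (dirichlet_density g p) \<partial>(lborel \<Otimes>\<^sub>M lborel))"
    by (simp only: lborel_prod)
  also have "\<dots> = (\<integral>\<^sup>+ t. (\<integral>\<^sup>+ s. ennreal (dirichlet_density g (t, s)) \<partial>lborel) \<partial>lborel)"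
    by (rule sigma_finite_measure.nn_integral_fst[OF sigma_finite_lborel, symmetric]) (simp add: lborel_prod)
  also have "\<dots> = (\<integral>\<^sup>+ t. ennreal (\<phi> t) \<partial>lborel)" by (simp add: inner)
  also have "\<dots> < \<infinity>"
    using integrableD(2)[OF phi_int] phi_nn by (simp add: top.not_eq_extremum)
  finally show ?thesis
    by (intro integrableI_nonneg) (auto simp: dd_nonneg[OF g])
qed

lemma rho_bound_int:
  fixes g B :: real and G :: "real \<times> real \<Rightarrow> real"
  assumes g: "g > 0" and Gm: "G \<in> borel_measurable borel" and Gb: "\<And>p. insimp p \<Longrightarrow> \<bar>G p\<bar> \<le> B"
  shows "integrable lborel (\<lambda>p. dirichlet_density g p * G p)"
proof (rule Bochner_Integration.integrable_bound)
  show "integrable lborel (\<lambda>p. B * dirichlet_density g p)"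
    by (rule integrable_mult_right) (rule rho_int[OF g])
  show "(\<lambda>p. dirichlet_density g p * G p) \<in> borel_measurable lborel"
    using Gm by measurable
  show "AE p in lborel. norm (dirichlet_density g p * G p) \<le> norm (B * dirichlet_density g p)"
  proof (rule AE_I2)
    fix p
    show "norm (dirichlet_density g p * G p) \<le> norm (B * dirichlet_density g p)"
    proof (cases "insimp p")
      case True
      have "\<bar>dirichlet_density g p * G p\<bar> = dirichlet_density g p * \<bar>G p\<bar>"
        using dd_nonneg[OF g] by (simp add: abs_mult)
      also have "\<dots> \<le> dirichlet_density g p * B"
        using Gb[OF True] dd_nonneg[OF g] by (intro mult_left_mono) auto
      also have "\<dots> \<le> \<bar>B * dirichlet_density g p\<bar>" by (simp add: mult_ac)
      finally show ?thesis by simp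
    next
      case False
      then show ?thesis by (simp add: dd_zero)
    qed
  qed
qed



definition emb :: "nat \<Rightarrow> real \<Rightarrow> real \<Rightarrow> real \<times> real" where
  "emb j t s = (if j = 1 then (t, s) else if j = 2 then (s, t) else (s, 1 - t - s))"

lemma pair_lb: "pair_sigma_finite (lborel :: real measure) (lborel :: real measure)"
  by (simp add: pair_sigma_finite_def sigma_finite_lborel)

lemma fubini_base:
  fixes g B :: real and F :: "real \<times> real \<Rightarrow> real"
  assumes g: "g > 0" and Fm: "F \<in> borel_measurable borel" and Fb: "\<And>p. insimp p \<Longrightarrow> \<bar>F p\<bar> \<le> B"
  shows "(LINT p|lborel. dirichlet_density g p * F p) = (LBINT t. LBINT s. dirichlet_density g (t, s) * F (t, s))"
proof -
  have I: "integrable (lborel \<Otimes>\<^sub>M lborel) (\<lambda>p. dirichlet_density g p * F p)"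
    using rho_bound_int[OF g Fm Fb] by (simp add: lborel_prod)
  have "(LINT p|lborel. dirichlet_density g p * F p) = (LINT p|(lborel \<Otimes>\<^sub>M lborel). dirichlet_density g p * F p)"
    by (simp only: lborel_prod)
  also have "\<dots> = (LBINT t. LBINT s. dirichlet_density g (t, s) * F (t, s))"
    using pair_sigma_finite.integral_fst'[OF pair_lb I] by simp
  finally show ?thesis .
qed

lemma fubini_emb:
  fixes g B :: real and F :: "real \<times> real \<Rightarrow> real"
  assumes g: "g > 0" and Fm: "F \<in> borel_measurable borel" and Fb: "\<And>p. insimp p \<Longrightarrow> \<bar>F p\<bar> \<le> B"
    and j: "j \<in> {1, 2, 3}"
  shows "(LINT p|lborel. dirichlet_density g p * F p) = (LBINT t. LBINT s. dirichlet_density g (t, s) * F (emb j t s))"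
proof -
  note base = fubini_base[OF g Fm Fb]
  consider "j = 1" | "j = 2" | "j = 3" using j by auto
  then show ?thesis
  proof cases
    case 1
    then show ?thesis using base by (simp add: emb_def)
  next
    case 2
    have I: "integrable (lborel \<Otimes>\<^sub>M lborel) (\<lambda>(x, y). dirichlet_density g (x, y) * F (x, y))"
      using rho_bound_int[OF g Fm Fb] by (simp add: lborel_prod split_beta')
    have "(LINT p|lborel. dirichlet_density g p * F p) = (LINT p|(lborel \<Otimes>\<^sub>M lborel). dirichlet_density g p * F p)"
      by (simp only: lborel_prod)
    also have "\<dots> = (LBINT y. LBINT x. dirichlet_density g (x, y) * F (x, y))"
      using pair_sigma_finite.integral_snd[OF pair_lb I] by (simp add: split_beta')
    also have "\<dots> = (LBINT t. LBINT s. dirichlet_density g (t, s) * F (emb j t s))"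
      using 2 by (simp add: emb_def dd_sym[of g _ "_"])
    finally show ?thesis .
  next
    case 3
    define G where "G p = F (snd p, 1 - fst p - snd p)" for p
    have Gm: "G \<in> borel_measurable borel"
      unfolding G_def borel_prod[symmetric] using Fm[unfolded borel_prod[symmetric]] by measurable
    have Gb: "\<bar>G p\<bar> \<le> B" if "insimp p" for p
      unfolding G_def by (rule Fb) (use that in \<open>auto simp: insimp_def\<close>)
    have I: "integrable (lborel \<Otimes>\<^sub>M lborel) (\<lambda>(x, y). dirichlet_density g (x, y) * G (x, y))"
      using rho_bound_int[OF g Gm Gb] by (simp add: lborel_prod split_beta')
    have "(LBINT t. LBINT s. dirichlet_density g (t, s) * F (emb j t s))
        = (LBINT t. LBINT s. dirichlet_density g (t, s) * G (t, s))"
      using 3 by (simp add: emb_def G_def)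
    also have "\<dots> = (LINT p|(lborel \<Otimes>\<^sub>M lborel). (\<lambda>(x, y). dirichlet_density g (x, y) * G (x, y)) p)"
      using pair_sigma_finite.integral_fst'[OF pair_lb I] by (simp add: split_beta')
    also have "\<dots> = (LBINT s. LBINT t. dirichlet_density g (t, s) * G (t, s))"
      using pair_sigma_finite.integral_snd[OF pair_lb I] by (simp add: split_beta')
    also have "\<dots> = (LBINT s. LBINT x. dirichlet_density g (s, x) * F (s, x))"
    proof (rule Bochner_Integration.integral_cong[OF refl])
      fix s :: real
      define f where "f t = dirichlet_density g (t, s) * G (t, s)" for t
      have "(LBINT t. f t) = \<bar>-1\<bar> *\<^sub>R (LBINT x. f ((1 - s) + (-1) * x))"
        by (rule lborel_integral_real_affine) simp
      also have "\<dots> = (LBINT x. dirichlet_density g (s, x) * F (s, x))"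
      proof -
        have "f ((1 - s) + (-1) * x) = dirichlet_density g (s, x) * F (s, x)" for x
        proof -
          have "dirichlet_density g (1 - s - x, s) = dirichlet_density g (s, 1 - s - x)" by (rule dd_sym)
          also have "\<dots> = dirichlet_density g (s, x)" by (rule dd_refl)
          finally show ?thesis by (simp add: f_def G_def)
        qed
        then show ?thesis by simp
      qed
      finally show "(LBINT t. dirichlet_density g (t, s) * G (t, s)) = (LBINT x. dirichlet_density g (s, x) * F (s, x))"
        by (simp add: f_def)
    qed
    also have "\<dots> = (LINT p|lborel. dirichlet_density g p * F p)" using base by simp
    finally show ?thesis by simp
  qed
qed



lemma jac_meas [measurable]: "jacobiJ g n \<in> borel_measurable borel"
  unfolding jacobiJ_def by measurable

lemma jac_bound: "\<exists>BJ. \<forall>u. 0 \<le> u \<and> u \<le> 1 \<longrightarrow> \<bar>jacobiJ g n u\<bar> \<le> BJ"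
proof -
  define a where "a k = (-1) ^ k * real (n choose k) * Gamma (real n + real k + 3 * g - 1) / Gamma (real k + g)" for k
  define Kc where "Kc = Gamma (real n + g) / (fact n * Gamma (real n + 3 * g - 1))"
  have J: "jacobiJ g n u = Kc * (\<Sum>k=0..n. a k * u ^ k)" for u
    by (simp add: jacobiJ_def a_def Kc_def)
  have "\<bar>jacobiJ g n u\<bar> \<le> \<bar>Kc\<bar> * (\<Sum>k=0..n. \<bar>a k\<bar>)" if "0 \<le> u" "u \<le> 1" for u
  proof -
    have "\<bar>\<Sum>k=0..n. a k * u ^ k\<bar> \<le> (\<Sum>k=0..n. \<bar>a k * u ^ k\<bar>)" by (rule sum_abs)
    also have "\<dots> \<le> (\<Sum>k=0..n. \<bar>a k\<bar>)"
    proof (rule sum_mono)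
      fix k
      have "\<bar>u ^ k\<bar> \<le> 1" using that by (simp add: power_le_one)
      then show "\<bar>a k * u ^ k\<bar> \<le> \<bar>a k\<bar>"
        by (simp add: abs_mult mult_left_le)
    qed
    finally show ?thesis unfolding J abs_mult by (intro mult_left_mono) auto
  qed
  then show ?thesis by blast
qed

lemma coord_insimp: "insimp p \<Longrightarrow> 0 \<le> coord i p \<and> coord i p \<le> 1"
  by (auto simp: insimp_def coord_def)

lemma coord_emb_j: "j \<in> {1, 2, 3} \<Longrightarrow> coord j (emb j t s) = t"
  by (auto simp: coord_def emb_def)

lemma inner_coord:
  assumes "i \<in> {1, 2, 3}" "j \<in> {1, 2, 3}" "i \<noteq> j"
  shows "(LBINT s. dirichlet_density g (t, s) * h (coord i (emb j t s))) = (LBINT s. dirichlet_density g (t, s) * h s)"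
proof -
  have "(\<forall>s. coord i (emb j t s) = s) \<or> (\<forall>s. coord i (emb j t s) = 1 - t - s)"
    using assms by (auto simp: coord_def emb_def)
  then show ?thesis
  proof
    assume "\<forall>s. coord i (emb j t s) = s" then show ?thesis by simp
  next
    assume "\<forall>s. coord i (emb j t s) = 1 - t - s"
    then show ?thesis using refl_int[of g t h] by simp
  qed
qed



lemma main_setint:
  fixes g :: real and i j n :: nat and Bs :: "real set"
  assumes g: "0 < g" and i: "i \<in> {1, 2, 3}" and j: "j \<in> {1, 2, 3}" and ij: "i \<noteq> j"
    and Bs: "Bs \<in> sets borel"
  shows "(LINT p|lborel. dirichlet_density g p * (indicator Bs (coord j p) * jacobiJ g n (coord i p)))
       = (LINT p|lborel. dirichlet_density g p * (indicator Bs (coord j p) * (jacobi_eig g n * jacobiJ g n (coord j p))))"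
proof -
  obtain BJ where BJ: "\<And>u. 0 \<le> u \<and> u \<le> 1 \<Longrightarrow> \<bar>jacobiJ g n u\<bar> \<le> BJ"
    using jac_bound[of g n] by blast
  have ind: "\<bar>indicator Bs x :: real\<bar> \<le> 1" for x by (simp add: indicator_def)
  have b1: "\<bar>indicator Bs (coord j p) * jacobiJ g n (coord i p)\<bar> \<le> BJ" if "insimp p" for p
  proof -
    have "\<bar>indicator Bs (coord j p) * jacobiJ g n (coord i p)\<bar> \<le> 1 * \<bar>jacobiJ g n (coord i p)\<bar>"
      unfolding abs_mult by (intro mult_right_mono ind) auto
    also have "\<dots> \<le> BJ" using BJ coord_insimp[OF that] by simp
    finally show ?thesis .
  qed
  have b2: "\<bar>indicator Bs (coord j p) * (jacobi_eig g n * jacobiJ g n (coord j p))\<bar> \<le> \<bar>jacobi_eig g n\<bar> * BJ" if "insimp p" for p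
  proof -
    have "\<bar>indicator Bs (coord j p) * (jacobi_eig g n * jacobiJ g n (coord j p))\<bar>
        \<le> 1 * (\<bar>jacobi_eig g n\<bar> * \<bar>jacobiJ g n (coord j p)\<bar>)"
      unfolding abs_mult by (intro mult_right_mono ind) auto
    also have "\<dots> \<le> \<bar>jacobi_eig g n\<bar> * BJ" using BJ coord_insimp[OF that]
      by (simp add: mult_left_mono)
    finally show ?thesis .
  qed
  have m1: "(\<lambda>p. indicator Bs (coord j p) * jacobiJ g n (coord i p) :: real) \<in> borel_measurable borel"
    using Bs by measurable
  have m2: "(\<lambda>p. indicator Bs (coord j p) * (jacobi_eig g n * jacobiJ g n (coord j p)) :: real) \<in> borel_measurable borel"
    using Bs by measurable
  have "(LINT p|lborel. dirichlet_density g p * (indicator Bs (coord j p) * jacobiJ g n (coord i p)))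
      = (LBINT t. LBINT s. dirichlet_density g (t, s) * (indicator Bs (coord j (emb j t s)) * jacobiJ g n (coord i (emb j t s))))"
    by (rule fubini_emb[OF g m1 b1 j])
  also have "\<dots> = (LBINT t. LBINT s. dirichlet_density g (t, s) * (indicator Bs (coord j (emb j t s)) * (jacobi_eig g n * jacobiJ g n (coord j (emb j t s)))))"
  proof (rule Bochner_Integration.integral_cong[OF refl])
    fix t :: real
    have "(LBINT s. dirichlet_density g (t, s) * (indicator Bs (coord j (emb j t s)) * jacobiJ g n (coord i (emb j t s))))
        = (LBINT s. dirichlet_density g (t, s) * ((\<lambda>x. indicator Bs t * jacobiJ g n x) (coord i (emb j t s))))"
      using coord_emb_j[OF j] by simp
    also have "\<dots> = (LBINT s. dirichlet_density g (t, s) * ((\<lambda>x. indicator Bs t * jacobiJ g n x) s))"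
      by (rule inner_coord[OF i j ij])
    also have "\<dots> = indicator Bs t * (LBINT s. dirichlet_density g (t, s) * jacobiJ g n s)"
      by (simp add: mult_ac)
    also have "\<dots> = indicator Bs t * (jacobi_eig g n * jacobiJ g n t * (LBINT s. dirichlet_density g (t, s)))"
      by (simp add: key1d[OF g])
    also have "\<dots> = (LBINT s. dirichlet_density g (t, s) * (indicator Bs (coord j (emb j t s)) * (jacobi_eig g n * jacobiJ g n (coord j (emb j t s)))))"
      using coord_emb_j[OF j] by (simp add: mult_ac)
    finally show "(LBINT s. dirichlet_density g (t, s) * (indicator Bs (coord j (emb j t s)) * jacobiJ g n (coord i (emb j t s))))
        = (LBINT s. dirichlet_density g (t, s) * (indicator Bs (coord j (emb j t s)) * (jacobi_eig g n * jacobiJ g n (coord j (emb j t s)))))" .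
  qed
  also have "\<dots> = (LINT p|lborel. dirichlet_density g p * (indicator Bs (coord j p) * (jacobi_eig g n * jacobiJ g n (coord j p))))"
    by (rule fubini_emb[OF g m2 b2 j, symmetric])
  finally show ?thesis .
qed



theorem mainTheorem16:
  fixes g :: real and i j n :: nat
  assumes "0 < g"
    and "i \<in> {1, 2, 3}" and "j \<in> {1, 2, 3}" and "i \<noteq> j"
  shows "AE p in dirichlet3 g.
           real_cond_exp (dirichlet3 g) (vimage_algebra (space (dirichlet3 g)) (coord j) borel)
             (\<lambda>q. jacobiJ g n (coord i q)) p
           = jacobi_eig g n * jacobiJ g n (coord j p)"
proof -
  note g = assms(1) and i = assms(2) and j = assms(3) and ij = assms(4)
  define M where "M = dirichlet3 g"
  define Fa where "Fa = vimage_algebra (space M) (coord j) borel"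
  have M_eq: "M = density lborel (\<lambda>p. ennreal (dirichlet_density g p))"
    by (simp add: M_def dirichlet3_def)
  have spM: "space M = UNIV" by (simp add: M_eq)
  have setsM: "sets M = sets borel" by (simp add: M_eq)
  have fin: "finite_measure M"
  proof (rule finite_measureI)
    have "emeasure M (space M) = (\<integral>\<^sup>+ p. ennreal (dirichlet_density g p) \<partial>lborel)"
      by (simp add: M_eq emeasure_density nn_integral_set_ennreal[symmetric] spM)
    also have "\<dots> < \<infinity>"
      using integrableD(2)[OF rho_int[OF g]] dd_nonneg[OF g] by (simp add: top.not_eq_extremum)
    finally show "emeasure M (space M) \<noteq> \<infinity>" by simp
  qed
  have cm: "coord j \<in> space M \<rightarrow> space borel" by simp
  have svA: "sets Fa = {coord j -` A \<inter> space M | A. A \<in> sets borel}"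
    unfolding Fa_def by (rule sets_vimage_algebra2[OF cm])
  have subalg: "subalgebra M Fa"
    unfolding subalgebra_def Fa_def
  proof
    show "sets (vimage_algebra (space M) (coord j) borel) \<subseteq> sets M"
      using measurable_sets[OF coord_meas[of j]] svA setsM spM by (auto simp: Fa_def)
    show "space (vimage_algebra (space M) (coord j) borel) = space M" by simp
  qed
  interpret fms: finite_measure_subalgebra M Fa
    using fin subalg by (simp add: finite_measure_subalgebra_def finite_measure_subalgebra_axioms_def)
  obtain BJ where BJ: "\<And>u. 0 \<le> u \<and> u \<le> 1 \<Longrightarrow> \<bar>jacobiJ g n u\<bar> \<le> BJ"
    using jac_bound[of g n] by blast
  have intM: "integrable M (\<lambda>q. c * jacobiJ g n (coord k q))" for c k
  proof -
    have "integrable lborel (\<lambda>p. dirichlet_density g p * (c * jacobiJ g n (coord k p)))"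
    proof (rule rho_bound_int[OF g])
      show "(\<lambda>p. c * jacobiJ g n (coord k p)) \<in> borel_measurable borel" by measurable
      fix p assume "insimp p"
      then show "\<bar>c * jacobiJ g n (coord k p)\<bar> \<le> \<bar>c\<bar> * BJ"
        using BJ coord_insimp by (simp add: abs_mult mult_left_mono)
    qed
    then show ?thesis unfolding M_eq
      by (subst integrable_density) (auto simp: dd_nonneg[OF g])
  qed
  have "AE x in M. real_cond_exp M Fa (\<lambda>q. jacobiJ g n (coord i q)) x = jacobi_eig g n * jacobiJ g n (coord j x)"
  proof (rule fms.real_cond_exp_charact)
    fix A assume A: "A \<in> sets Fa"
    then obtain Bs where Bs: "Bs \<in> sets borel" and AB: "A = coord j -` Bs \<inter> space M"
      using svA by auto
    have indA: "indicator A p = (indicator Bs (coord j p) :: real)" for p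
      by (simp add: AB spM indicator_def)
    have Am: "A \<in> sets borel" using A subalg setsM by (auto simp: subalgebra_def)
    have "(\<integral>x\<in>A. jacobiJ g n (coord i x) \<partial>M) = (LINT p|lborel. dirichlet_density g p * (indicator Bs (coord j p) * jacobiJ g n (coord i p)))"
      unfolding set_lebesgue_integral_def M_eq
      by (subst integral_density) (use Am Bs in \<open>auto simp: dd_nonneg[OF g] indA\<close>)
    also have "\<dots> = (LINT p|lborel. dirichlet_density g p * (indicator Bs (coord j p) * (jacobi_eig g n * jacobiJ g n (coord j p))))"
      by (rule main_setint[OF g i j ij Bs])
    also have "\<dots> = (\<integral>x\<in>A. jacobi_eig g n * jacobiJ g n (coord j x) \<partial>M)"
      unfolding set_lebesgue_integral_def M_eq
      by (subst integral_density) (use Am Bs in \<open>auto simp: dd_nonneg[OF g] indA\<close>)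
    finally show "(\<integral>x\<in>A. jacobiJ g n (coord i x) \<partial>M) = (\<integral>x\<in>A. jacobi_eig g n * jacobiJ g n (coord j x) \<partial>M)" .
  next
    show "integrable M (\<lambda>q. jacobiJ g n (coord i q))" using intM[of 1 i] by simp
    show "integrable M (\<lambda>x. jacobi_eig g n * jacobiJ g n (coord j x))" by (rule intM)
    have "coord j \<in> Fa \<rightarrow>\<^sub>M borel" unfolding Fa_def by (rule measurable_vimage_algebra1) simp
    then show "(\<lambda>x. jacobi_eig g n * jacobiJ g n (coord j x)) \<in> borel_measurable Fa" by measurable
  qed
  then show ?thesis by (simp only: M_def Fa_def)
qed


end
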